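(* Let $\mathcal{K}^\star_{loc}$, $\{k\}$ and $\mathcal{K}_{g,user}$ be pairwise disjoint finite sets of keyframes, with weighted undirected edges (weights $w_e\geq1$) among $\mathcal{K}^\star_{loc}\cup\{k\}$ and between $\mathcal{K}^\star_{loc}\cup\{k\}$ and $\mathcal{K}_{g,user}$, such that the graph on $\mathcal{K}^\star_{loc}\cup\{k\}$ is connected, and let $\mathcal{I}$ be a symmetric positive definite $6\times6$ matrix with $\det\mathcal{I}\geq1$. For $F\subseteq\mathcal{K}_{g,user}$ define $$g(F)=\log\det\big(\tilde{\mathcal{I}}_{loc}(\mathcal{K}^\star_{loc}\cup\{k\},F)\big).$$ Then $g$ is non-negative, monotone nondecreasing, and submodular on $2^{\mathcal{K}_{g,user}}$; in particular the problem $\max_{F\subseteq\mathcal{K}_{g,user},|F|\leq l_f}g(F)$ is the maximization of a non-negative monotone submodular function under a cardinality constraint.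
   Context: For disjoint keyframe sets $\mathcal{K}_{loc}=\{r_1,\dots,r_L\}$ (ordered) and $\mathcal{K}_{fixed}$, $\tilde{\mathcal{I}}_{loc}(\mathcal{K}_{loc},\mathcal{K}_{fixed})=\tilde{\mathbf{L}}_{loc}\otimes\mathcal{I}$, where $\mathbf{L}_{loc}$ is the $L\times L$ matrix with $[\mathbf{L}_{loc}]_{i,j}=-\sum_{e\text{ between }r_i,r_j}w_e$ for $i\neq j$ and $[\mathbf{L}_{loc}]_{i,i}=\sum w_e$ over all edges joining $r_i$ to another node of $\mathcal{K}_{loc}\cup\mathcal{K}_{fixed}$, and $\tilde{\mathbf{L}}_{loc}$ is $\mathbf{L}_{loc}$ with its first row and column deleted; $\otimes$ is the Kronecker product. A set function $g$ is submodular if $g(L)+g(S)\geq g(L\cup S)+g(L\cap S)$ for all subsets $L,S$. *)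

theory Defs
  imports "Jordan_Normal_Form.Determinant"
begin

definition kron :: "real mat \<Rightarrow> real mat \<Rightarrow> real mat" where
  "kron A B = mat (dim_row A * dim_row B) (dim_col A * dim_col B)
     (\<lambda>(i,j). A $$ (i div dim_row B, j div dim_col B) * B $$ (i mod dim_row B, j mod dim_col B))"

(* L_loc for the ordered local set r 0, ..., r (n-1) and fixed set Kf;
   w x y = total weight of the edges between x and y (0 = no edge) *)
definition L_loc :: "('a \<Rightarrow> 'a \<Rightarrow> real) \<Rightarrow> nat \<Rightarrow> (nat \<Rightarrow> 'a) \<Rightarrow> 'a set \<Rightarrow> real mat" where
  "L_loc w n r Kf = mat n n (\<lambda>(i,j).
     if i = j then (\<Sum>y \<in> (r ` {0..<n} \<union> Kf) - {r i}. w (r i) y)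
     else - w (r i) (r j))"

definition I_loc_tilde :: "('a \<Rightarrow> 'a \<Rightarrow> real) \<Rightarrow> real mat \<Rightarrow> nat \<Rightarrow> (nat \<Rightarrow> 'a) \<Rightarrow> 'a set \<Rightarrow> real mat" where
  "I_loc_tilde w Info n r Kf = kron (mat_delete (L_loc w n r Kf) 0 0) Info"

definition sym_pos_def :: "nat \<Rightarrow> real mat \<Rightarrow> bool" where
  "sym_pos_def d M \<longleftrightarrow> M \<in> carrier_mat d d \<and> transpose_mat M = M \<and>
     (\<forall>v \<in> carrier_vec d. v \<noteq> 0\<^sub>v d \<longrightarrow> v \<bullet> (M *\<^sub>v v) > 0)"

definition connected_on :: "('a \<Rightarrow> 'a \<Rightarrow> real) \<Rightarrow> 'a set \<Rightarrow> bool" where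
  "connected_on w V \<longleftrightarrow> (\<forall>x\<in>V. \<forall>y\<in>V.
     (\<lambda>a b. a \<in> V \<and> b \<in> V \<and> w a b \<noteq> 0)\<^sup>*\<^sup>* x y)"

end

theory Submission
  imports Defs
begin

lemma kron_carrier: "kron A B \<in> carrier_mat (dim_row A * dim_row B) (dim_col A * dim_col B)"
  unfolding kron_def by auto

lemma kron_dims[simp]: "dim_row (kron A B) = dim_row A * dim_row B" "dim_col (kron A B) = dim_col A * dim_col B"
  unfolding kron_def by auto

lemma kron_index: "i < dim_row A * dim_row B \<Longrightarrow> j < dim_col A * dim_col B \<Longrightarrow>
  kron A B $$ (i,j) = A $$ (i div dim_row B, j div dim_col B) * B $$ (i mod dim_row B, j mod dim_col B)"
  unfolding kron_def by auto

lemma kron_mixed: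
  assumes A: "A \<in> carrier_mat p p" and B: "B \<in> carrier_mat q q"
  shows "kron A B = kron A (1\<^sub>m q) * kron (1\<^sub>m p) B"
proof (rule eq_matI)
  show "dim_row (kron A B) = dim_row (kron A (1\<^sub>m q) * kron (1\<^sub>m p) B)"
    using A B by (simp add: kron_def)
  show "dim_col (kron A B) = dim_col (kron A (1\<^sub>m q) * kron (1\<^sub>m p) B)"
    using A B by (simp add: kron_def)
  fix i j assume i: "i < dim_row (kron A (1\<^sub>m q) * kron (1\<^sub>m p) B)"
     and j: "j < dim_col (kron A (1\<^sub>m q) * kron (1\<^sub>m p) B)"
  hence i: "i < p*q" and j: "j < p*q" using A B by (auto simp: kron_def)
  hence qp: "q > 0" by (cases q) auto
  have idiv: "i div q < p" and jdiv: "j div q < p" using i j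
    by (simp_all add: less_mult_imp_div_less)
  define k0 where "k0 = (j div q) * q + i mod q"
  have k0: "k0 < p*q"
  proof -
    have "k0 < (j div q) * q + q" unfolding k0_def using qp by simp
    also have "\<dots> = (j div q + 1) * q" by simp
    also have "\<dots> \<le> p * q" using jdiv by (intro mult_right_mono) auto
    finally show ?thesis .
  qed
  have "(kron A (1\<^sub>m q) * kron (1\<^sub>m p) B) $$ (i,j) =
     (\<Sum>k = 0..<p*q. kron A (1\<^sub>m q) $$ (i,k) * kron (1\<^sub>m p) B $$ (k,j))"
    using i j A B by (simp add: kron_def scalar_prod_def)
  also have "\<dots> = (\<Sum>k = 0..<p*q. if k = k0 then A $$ (i div q, j div q) * B $$ (i mod q, j mod q) else 0)"
  proof (rule sum.cong[OF refl])
    fix k assume k: "k \<in> {0..<p*q}"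
    hence kd: "k div q < p" by (simp add: less_mult_imp_div_less)
    have km: "k mod q < q" "i mod q < q" "j mod q < q" using qp by auto
    have e: "kron A (1\<^sub>m q) $$ (i,k) * kron (1\<^sub>m p) B $$ (k,j)
       = A $$ (i div q, k div q) * (if i mod q = k mod q then 1 else 0) *
         ((if k div q = j div q then 1 else 0) * B $$ (k mod q, j mod q))"
      using i j k A B km kd jdiv by (simp add: kron_def)
    show "kron A (1\<^sub>m q) $$ (i,k) * kron (1\<^sub>m p) B $$ (k,j) =
      (if k = k0 then A $$ (i div q, j div q) * B $$ (i mod q, j mod q) else 0)"
    proof (cases "k = k0")
      case True
      hence "k div q = j div q" "k mod q = i mod q" unfolding k0_def using qp by auto
      then show ?thesis using e True by simp
    next
      case False
      have "\<not> (i mod q = k mod q \<and> k div q = j div q)"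
      proof
        assume "i mod q = k mod q \<and> k div q = j div q"
        hence "k = k0" unfolding k0_def by (metis div_mult_mod_eq)
        with False show False by simp
      qed
      then show ?thesis using e False by auto
    qed
  qed
  also have "\<dots> = A $$ (i div q, j div q) * B $$ (i mod q, j mod q)"
    using k0 by simp
  also have "\<dots> = kron A B $$ (i,j)" using i j A B by (simp add: kron_def)
  finally show "kron A B $$ (i,j) = (kron A (1\<^sub>m q) * kron (1\<^sub>m p) B) $$ (i,j)" by simp
qed

lemma det_0x0: "A \<in> carrier_mat 0 0 \<Longrightarrow> det A = 1"
proof -
  assume A: "A \<in> carrier_mat 0 0"
  have "A = 1\<^sub>m 0" using A by (intro eq_matI) auto
  thus ?thesis by simp
qed

lemma det_kron_one_left:
  assumes B: "B \<in> carrier_mat q q"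
  shows "det (kron (1\<^sub>m p) B) = det B ^ p"
proof (cases "q = 0")
  case True
  hence "kron (1\<^sub>m p) B \<in> carrier_mat 0 0" using B kron_carrier[of "1\<^sub>m p" B] by auto
  moreover have "det B = 1" using B True det_0x0 by auto
  ultimately show ?thesis using det_0x0 by simp
next
  case False
  hence qp: "q > 0" by simp
  show ?thesis
  proof (induction p)
    case 0
    have "kron (1\<^sub>m 0) B \<in> carrier_mat 0 0" using B kron_carrier[of "1\<^sub>m 0" B] by auto
    then show ?case using det_0x0 by simp
  next
    case (Suc p)
    have eq: "kron (1\<^sub>m (Suc p)) B = four_block_mat B (0\<^sub>m q (p*q)) (0\<^sub>m (p*q) q) (kron (1\<^sub>m p) B)"
    proof (rule eq_matI)
      fix i j assume i: "i < dim_row (four_block_mat B (0\<^sub>m q (p*q)) (0\<^sub>m (p*q) q) (kron (1\<^sub>m p) B))"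
        and j: "j < dim_col (four_block_mat B (0\<^sub>m q (p*q)) (0\<^sub>m (p*q) q) (kron (1\<^sub>m p) B))"
      hence i: "i < q + p*q" and j: "j < q + p*q" using B by (auto simp: kron_def)
      have id: "i div q < Suc p" "j div q < Suc p" using i j
        by (simp_all add: less_mult_imp_div_less)
      show "kron (1\<^sub>m (Suc p)) B $$ (i,j) = four_block_mat B (0\<^sub>m q (p*q)) (0\<^sub>m (p*q) q) (kron (1\<^sub>m p) B) $$ (i,j)"
      proof -
        have lhs: "kron (1\<^sub>m (Suc p)) B $$ (i,j) = (if i div q = j div q then 1 else 0) * B $$ (i mod q, j mod q)"
          using i j B id by (simp add: kron_def)
        show ?thesis
        proof (cases "i < q")
          case iq: True
          show ?thesis
          proof (cases "j < q")
            case True then show ?thesis using iq lhs i j B by (simp add: four_block_mat_def Let_def)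
          next
            case False
            hence "j div q \<noteq> 0" using qp by (simp add: div_eq_0_iff)
            then show ?thesis using iq False lhs i j B by (simp add: four_block_mat_def Let_def)
          qed
        next
          case niq: False
          have i1: "i div q = Suc ((i - q) div q)" "i mod q = (i - q) mod q"
            using niq qp by (simp_all add: le_div_geq le_mod_geq)
          have i2: "(i - q) div q < p" using i niq by (simp add: less_mult_imp_div_less)
          show ?thesis
          proof (cases "j < q")
            case True
            hence "j div q = 0" by simp
            then show ?thesis using niq True lhs i j B i1 by (simp add: four_block_mat_def Let_def)
          next
            case False
            have j1: "j div q = Suc ((j - q) div q)" "j mod q = (j - q) mod q"
              using False qp by (simp_all add: le_div_geq le_mod_geq)
            have j2: "(j - q) div q < p" using j False by (simp add: less_mult_imp_div_less)
            show ?thesis using niq False lhs i j B i1 j1 i2 j2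
              by (simp add: four_block_mat_def Let_def kron_def)
          qed
        qed
      qed
    qed (insert B, auto simp: kron_def)
    have "det (kron (1\<^sub>m (Suc p)) B) = det B * det (kron (1\<^sub>m p) B)"
      unfolding eq
      by (rule det_four_block_mat_lower_left_zero[OF B], insert B kron_carrier[of "1\<^sub>m p" B], auto)
    then show ?case using Suc by simp
  qed
qed

lemma det_perm_sim:
  assumes C: "C \<in> carrier_mat N N" and s: "s permutes {0..<N}"
  shows "det (mat N N (\<lambda>(i,j). C $$ (s i, s j))) = det C"
proof -
  define D where "D = mat N N (\<lambda>(i,j). C $$ (i, s j))"
  have D: "D \<in> carrier_mat N N" unfolding D_def by simp
  have sN: "\<And>i. i < N \<Longrightarrow> s i < N" using s permutes_in_image by fastforce
  have e1: "mat N N (\<lambda>(i,j). C $$ (s i, s j)) = mat N N (\<lambda>(i,j). D $$ (s i, j))"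
    by (rule eq_matI, auto simp: D_def sN)
  have e2: "transpose_mat D = mat N N (\<lambda>(i,j). transpose_mat C $$ (s i, j))"
    by (rule eq_matI, insert C, auto simp: D_def sN)
  have "det D = det (transpose_mat D)" using det_transpose[OF D] by simp
  also have "\<dots> = of_int (sign s) * det C"
    unfolding e2 by (subst det_permute_rows[OF _ s], insert C, auto simp: det_transpose)
  finally have dD: "det D = of_int (sign s) * det C" .
  have "det (mat N N (\<lambda>(i,j). C $$ (s i, s j))) = of_int (sign s) * (of_int (sign s) * det C)"
    unfolding e1 by (subst det_permute_rows[OF D s], simp add: dD)
  also have "\<dots> = det C" by (simp add: sign_def)
  finally show ?thesis .
qed

lemma det_kron:
  assumes A: "A \<in> carrier_mat p p" and B: "B \<in> carrier_mat q q"
  shows "det (kron A B) = det A ^ q * det B ^ p"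
proof (cases "q = 0")
  case True
  hence "kron A B \<in> carrier_mat 0 0" using A B kron_carrier[of A B] by auto
  then show ?thesis using True det_0x0 B by auto
next
  case False
  hence qp: "q > 0" by simp
  define N where "N = p * q"
  define s where "s = (\<lambda>i. if i < N then (i mod q) * p + i div q else i)"
  have sN: "s i < N" if "i < N" for i
  proof -
    have d: "i div q < p" using that unfolding N_def by (simp add: less_mult_imp_div_less)
    have "s i < (i mod q) * p + p" using that d unfolding s_def by simp
    also have "\<dots> = (i mod q + 1) * p" by simp
    also have "\<dots> \<le> q * p" using qp by (intro mult_right_mono) (auto simp: Suc_le_eq)
    finally show ?thesis unfolding N_def by (simp add: mult.commute)
  qed
  have sdiv: "s i div p = i mod q" "s i mod p = i div q" if "i < N" for i
  proof -
    have d: "i div q < p" using that unfolding N_def by (simp add: less_mult_imp_div_less)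
    show "s i div p = i mod q" "s i mod p = i div q" using that d unfolding s_def by auto
  qed
  have inj: "inj_on s {0..<N}"
  proof
    fix i j assume i: "i \<in> {0..<N}" and j: "j \<in> {0..<N}" and e: "s i = s j"
    have "i mod q = j mod q" "i div q = j div q" using sdiv[of i] sdiv[of j] i j e by auto
    thus "i = j" by (metis div_mult_mod_eq)
  qed
  have perm: "s permutes {0..<N}"
  proof (rule bij_imp_permutes)
    have "s ` {0..<N} \<subseteq> {0..<N}" using sN by auto
    hence "s ` {0..<N} = {0..<N}" using inj endo_inj_surj[of "{0..<N}" s] by auto
    thus "bij_betw s {0..<N} {0..<N}" unfolding bij_betw_def using inj by auto
    show "\<And>x. x \<notin> {0..<N} \<Longrightarrow> s x = x" unfolding s_def by auto
  qed
  have C: "kron (1\<^sub>m q) A \<in> carrier_mat N N" using kron_carrier[of "1\<^sub>m q" A] A unfolding N_def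
    by (auto simp: mult.commute)
  have eq: "kron A (1\<^sub>m q) = mat N N (\<lambda>(i,j). kron (1\<^sub>m q) A $$ (s i, s j))"
  proof (rule eq_matI)
    fix i j assume i: "i < dim_row (mat N N (\<lambda>(i,j). kron (1\<^sub>m q) A $$ (s i, s j)))"
      and j: "j < dim_col (mat N N (\<lambda>(i,j). kron (1\<^sub>m q) A $$ (s i, s j)))"
    hence i: "i < N" and j: "j < N" by auto
    have d: "i div q < p" "j div q < p" using i j unfolding N_def by (simp_all add: less_mult_imp_div_less)
    have si: "s i < q * p" "s j < q * p" using sN[OF i] sN[OF j] unfolding N_def by (simp_all add: mult.commute)
    show "kron A (1\<^sub>m q) $$ (i,j) = mat N N (\<lambda>(i,j). kron (1\<^sub>m q) A $$ (s i, s j)) $$ (i,j)"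
      using i j A si d qp sdiv[OF i] sdiv[OF j] unfolding N_def by (simp add: kron_def)
  qed (insert A, auto simp: N_def)
  have "det (kron A (1\<^sub>m q)) = det A ^ q"
    unfolding eq det_perm_sim[OF C perm] by (rule det_kron_one_left[OF A])
  moreover have "det (kron (1\<^sub>m p) B) = det B ^ p" by (rule det_kron_one_left[OF B])
  moreover have "det (kron A B) = det (kron A (1\<^sub>m q)) * det (kron (1\<^sub>m p) B)"
    unfolding kron_mixed[OF A B]
    by (rule det_mult[of _ N], insert A B, auto simp: kron_def N_def)
  ultimately show ?thesis by simp
qed

definition addd :: "real mat \<Rightarrow> (nat \<Rightarrow> real) \<Rightarrow> real mat" where
  "addd Y d = mat (dim_row Y) (dim_col Y) (\<lambda>(a,b). Y $$ (a,b) + (if a = b then d a else 0))"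

definition exc :: "real mat \<Rightarrow> nat \<Rightarrow> real" where
  "exc Y i = (\<Sum>j = 0..<dim_row Y. Y $$ (i,j))"

definition cls :: "nat \<Rightarrow> real mat \<Rightarrow> bool" where
  "cls m Y \<longleftrightarrow> Y \<in> carrier_mat m m \<and> (\<forall>i<m. \<forall>j<m. Y $$ (i,j) = Y $$ (j,i))
     \<and> (\<forall>i<m. \<forall>j<m. i \<noteq> j \<longrightarrow> Y $$ (i,j) \<le> 0) \<and> (\<forall>i<m. exc Y i \<ge> 0)"

definition adjr :: "real mat \<Rightarrow> nat \<Rightarrow> nat \<Rightarrow> bool" where
  "adjr Y i j \<longleftrightarrow> i < dim_row Y \<and> j < dim_row Y \<and> i \<noteq> j \<and> Y $$ (i,j) \<noteq> 0"

definition scls :: "nat \<Rightarrow> real mat \<Rightarrow> bool" where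
  "scls m Y \<longleftrightarrow> cls m Y \<and> (\<forall>i<m. \<forall>j<m. i \<noteq> j \<longrightarrow> Y $$ (i,j) \<noteq> 0 \<longrightarrow> Y $$ (i,j) \<le> -1)
     \<and> (\<forall>i<m. \<exists>z<m. (adjr Y)\<^sup>*\<^sup>* i z \<and> exc Y z \<ge> 1)"

lemma addd_dims[simp]: "dim_row (addd Y d) = dim_row Y" "dim_col (addd Y d) = dim_col Y"
  unfolding addd_def by auto

lemma addd_index: "a < dim_row Y \<Longrightarrow> b < dim_col Y \<Longrightarrow>
   addd Y d $$ (a,b) = Y $$ (a,b) + (if a = b then d a else 0)"
  unfolding addd_def by auto

lemma addd_carrier: "Y \<in> carrier_mat m m \<Longrightarrow> addd Y d \<in> carrier_mat m m"
  unfolding addd_def by auto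

lemma addd_addd: "addd (addd Y a) b = addd Y (\<lambda>i. a i + b i)"
  by (rule eq_matI, auto simp: addd_def)

lemma addd_cong: "Y \<in> carrier_mat m m \<Longrightarrow> (\<And>i. i < m \<Longrightarrow> a i = b i) \<Longrightarrow> addd Y a = addd Y b"
  by (rule eq_matI, auto simp: addd_def)

lemma addd_zero: "addd Y (\<lambda>_. 0) = Y"
  by (rule eq_matI, auto simp: addd_def)

lemma exc_addd: "Y \<in> carrier_mat m m \<Longrightarrow> i < m \<Longrightarrow> exc (addd Y d) i = exc Y i + d i"
proof -
  assume Y: "Y \<in> carrier_mat m m" and i: "i < m"
  have "exc (addd Y d) i = (\<Sum>j = 0..<m. Y $$ (i,j) + (if i = j then d i else 0))"
    unfolding exc_def using Y i by (auto simp: addd_def intro: sum.cong)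
  also have "\<dots> = exc Y i + d i" unfolding exc_def sum.distrib using Y i by simp
  finally show ?thesis .
qed

lemma mat_delete_idx: "Y \<in> carrier_mat m m \<Longrightarrow> a < m - 1 \<Longrightarrow> b < m - 1 \<Longrightarrow>
  mat_delete Y k k $$ (a,b) = Y $$ (if a < k then a else Suc a, if b < k then b else Suc b)"
  unfolding mat_delete_def by auto

lemma det_update:
  assumes Y: "Y \<in> carrier_mat n n" and i: "i < n"
  shows "det (addd Y (\<lambda>a. if a = i then c else 0)) = det Y + c * det (mat_delete Y i i)"
proof -
  let ?Y = "addd Y (\<lambda>a. if a = i then c else 0)"
  have Y': "?Y \<in> carrier_mat n n" using addd_carrier[OF Y] .
  have cof: "cofactor ?Y i j = cofactor Y i j" for j
  proof -
    have "mat_delete ?Y i j = mat_delete Y i j"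
      by (rule eq_matI, insert Y i, auto simp: mat_delete_def addd_def)
    thus ?thesis unfolding cofactor_def by simp
  qed
  have "det ?Y = (\<Sum>j<n. ?Y $$ (i,j) * cofactor ?Y i j)" by (rule laplace_expansion_row[OF Y' i])
  also have "\<dots> = (\<Sum>j<n. Y $$ (i,j) * cofactor Y i j + (if j = i then c * cofactor Y i i else 0))"
    by (rule sum.cong, insert Y i, auto simp: cof addd_index algebra_simps)
  also have "\<dots> = det Y + c * cofactor Y i i"
    unfolding sum.distrib laplace_expansion_row[OF Y i, symmetric] using i by simp
  also have "cofactor Y i i = det (mat_delete Y i i)" unfolding cofactor_def
    by (simp add: power_even_eq[of "-1::real"] flip: mult_2)
  finally show ?thesis .
qed

definition fidx :: "nat \<Rightarrow> nat \<Rightarrow> nat" where "fidx k a = (if a < k then a else Suc a)"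
definition gidx :: "nat \<Rightarrow> nat \<Rightarrow> nat" where "gidx k x = (if x < k then x else x - 1)"

lemma fidx_image: "k < m \<Longrightarrow> fidx k ` {0..<m-1} = {0..<m} - {k}"
proof
  assume k: "k < m"
  show "fidx k ` {0..<m-1} \<subseteq> {0..<m} - {k}" using k by (auto simp: fidx_def)
  show "{0..<m} - {k} \<subseteq> fidx k ` {0..<m-1}"
  proof
    fix x assume x: "x \<in> {0..<m} - {k}"
    hence "x = fidx k (gidx k x)" "gidx k x \<in> {0..<m-1}" using k by (auto simp: fidx_def gidx_def)
    thus "x \<in> fidx k ` {0..<m-1}" by blast
  qed
qed

lemma fidx_inj: "inj (fidx k)" by (rule injI) (auto simp: fidx_def split: if_splits)

lemma mat_delete_idx': "Y \<in> carrier_mat m m \<Longrightarrow> a < m - 1 \<Longrightarrow> b < m - 1 \<Longrightarrow>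
  mat_delete Y k k $$ (a,b) = Y $$ (fidx k a, fidx k b)"
  unfolding mat_delete_def fidx_def by auto

lemma exc_delete:
  assumes Y: "Y \<in> carrier_mat m m" and k: "k < m" and a: "a < m - 1"
  shows "exc (mat_delete Y k k) a = exc Y (fidx k a) - Y $$ (fidx k a, k)"
proof -
  have "exc (mat_delete Y k k) a = (\<Sum>b = 0..<m-1. Y $$ (fidx k a, fidx k b))"
    unfolding exc_def using Y a by (auto simp: mat_delete_idx' intro: sum.cong)
  also have "\<dots> = (\<Sum>c \<in> fidx k ` {0..<m-1}. Y $$ (fidx k a, c))"
    by (subst sum.reindex, insert fidx_inj, auto simp: inj_on_def inj_def)
  also have "\<dots> = (\<Sum>c \<in> {0..<m} - {k}. Y $$ (fidx k a, c))" using fidx_image[OF k] by simp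
  also have "\<dots> = exc Y (fidx k a) - Y $$ (fidx k a, k)" unfolding exc_def using Y k
    by (simp add: sum_diff1)
  finally show ?thesis .
qed

lemma cls_delete:
  assumes c: "cls m Y" and k: "k < m"
  shows "cls (m-1) (mat_delete Y k k)"
proof -
  have Y: "Y \<in> carrier_mat m m" using c unfolding cls_def by auto
  have f: "fidx k a < m" if "a < m - 1" for a using that k by (auto simp: fidx_def)
  have fne: "fidx k a \<noteq> k" for a by (auto simp: fidx_def)
  show ?thesis unfolding cls_def
  proof (intro conjI allI impI)
    show "mat_delete Y k k \<in> carrier_mat (m - 1) (m - 1)" using mat_delete_carrier[OF Y] .
    fix i assume i: "i < m - 1"
    { fix j assume j: "j < m - 1"
      show "mat_delete Y k k $$ (i, j) = mat_delete Y k k $$ (j, i)"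
        using c i j f unfolding cls_def by (simp add: mat_delete_idx'[OF Y])
      assume "i \<noteq> j"
      hence "fidx k i \<noteq> fidx k j" using fidx_inj by (auto simp: inj_def)
      thus "mat_delete Y k k $$ (i, j) \<le> 0"
        using c i j f unfolding cls_def by (simp add: mat_delete_idx'[OF Y])
    }
    have "Y $$ (fidx k i, k) \<le> 0" using c f[OF i] fne k unfolding cls_def by auto
    thus "0 \<le> exc (mat_delete Y k k) i"
      unfolding exc_delete[OF Y k i] using c f[OF i] unfolding cls_def by auto
  qed
qed

lemma cls_addd:
  assumes c: "cls m Y" and d: "\<And>i. d i \<ge> 0"
  shows "cls m (addd Y d)"
proof -
  have Y: "Y \<in> carrier_mat m m" using c unfolding cls_def by auto
  show ?thesis unfolding cls_def
  proof (intro conjI allI impI)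
    show "addd Y d \<in> carrier_mat m m" using addd_carrier[OF Y] .
    fix i assume i: "i < m"
    { fix j assume j: "j < m"
      show "addd Y d $$ (i, j) = addd Y d $$ (j, i)" using c i j Y unfolding cls_def
        by (auto simp: addd_index)
      assume "i \<noteq> j"
      thus "addd Y d $$ (i, j) \<le> 0" using c i j Y unfolding cls_def by (auto simp: addd_index) }
    show "0 \<le> exc (addd Y d) i" unfolding exc_addd[OF Y i] using c i d unfolding cls_def
      by (simp add: add_nonneg_nonneg)
  qed
qed

lemma cls_det_nonneg: "cls m Y \<Longrightarrow> det Y \<ge> 0"
proof (induction m arbitrary: Y)
  case 0
  then show ?case using det_0x0 unfolding cls_def by auto
next
  case (Suc m)
  have main: "\<And>Y. cls (Suc m) Y \<Longrightarrow> card {i. i < Suc m \<and> exc Y i \<noteq> 0} = K \<Longrightarrow> det Y \<ge> 0" for K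
  proof (induction K rule: less_induct)
    case (less K Y)
    have Y: "Y \<in> carrier_mat (Suc m) (Suc m)" using less.prems unfolding cls_def by auto
    show ?case
    proof (cases "\<exists>i<Suc m. exc Y i \<noteq> 0")
      case False
      define v where "v = vec (Suc m) (\<lambda>_. 1::real)"
      have "Y *\<^sub>v v = 0\<^sub>v (Suc m)"
      proof (rule eq_vecI)
        fix i assume "i < dim_vec (0\<^sub>v (Suc m))"
        hence i: "i < Suc m" by simp
        have "(Y *\<^sub>v v) $ i = exc Y i" using Y i
          by (simp add: v_def exc_def scalar_prod_def)
        thus "(Y *\<^sub>v v) $ i = 0\<^sub>v (Suc m) $ i" using False i by simp
      qed (insert Y, auto simp: v_def)
      moreover have "v \<noteq> 0\<^sub>v (Suc m)"
      proof
        assume "v = 0\<^sub>v (Suc m)"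
        hence "v $ 0 = 0\<^sub>v (Suc m) $ 0" by simp
        thus False by (simp add: v_def)
      qed
      moreover have "v \<in> carrier_vec (Suc m)" by (simp add: v_def)
      ultimately have "det Y = 0" using det_0_iff_vec_prod_zero_field[OF Y] by blast
      then show ?thesis by simp
    next
      case True
      then obtain i where i: "i < Suc m" and ne: "exc Y i \<noteq> 0" by blast
      have pos: "exc Y i > 0" using less.prems(1) i ne unfolding cls_def by force
      define Y' where "Y' = addd Y (\<lambda>a. if a = i then - exc Y i else 0)"
      have ex': "exc Y' j = (if j = i then 0 else exc Y j)" if "j < Suc m" for j
        unfolding Y'_def exc_addd[OF Y that] by auto
      have cY': "cls (Suc m) Y'" unfolding cls_def
      proof (intro conjI allI impI)
        show "Y' \<in> carrier_mat (Suc m) (Suc m)" unfolding Y'_def using addd_carrier[OF Y] .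
        fix a assume a: "a < Suc m"
        { fix b assume b: "b < Suc m"
          show "Y' $$ (a, b) = Y' $$ (b, a)" using less.prems(1) a b Y unfolding cls_def Y'_def
            by (auto simp: addd_index)
          assume "a \<noteq> b"
          thus "Y' $$ (a, b) \<le> 0" using less.prems(1) a b Y unfolding cls_def Y'_def
            by (auto simp: addd_index) }
        show "0 \<le> exc Y' a" using ex'[OF a] less.prems(1) a unfolding cls_def by auto
      qed
      have seteq: "{j. j < Suc m \<and> exc Y' j \<noteq> 0} = {j. j < Suc m \<and> exc Y j \<noteq> 0} - {i}"
      proof (rule Set.set_eqI)
        fix j
        show "j \<in> {j. j < Suc m \<and> exc Y' j \<noteq> 0} \<longleftrightarrow> j \<in> {j. j < Suc m \<and> exc Y j \<noteq> 0} - {i}"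
        proof (cases "j < Suc m")
          case True
          then show ?thesis using ex'[OF True] by simp
        qed simp
      qed
      have fin: "finite {j. j < Suc m \<and> exc Y j \<noteq> 0}" by simp
      have iin: "i \<in> {j. j < Suc m \<and> exc Y j \<noteq> 0}" using i ne by simp
      have "card {j. j < Suc m \<and> exc Y' j \<noteq> 0} < K"
        unfolding seteq less.prems(2)[symmetric] by (rule card_Diff1_less[OF fin iin])
      hence d1: "det Y' \<ge> 0" using less.IH cY' by blast
      have d2: "det (mat_delete Y i i) \<ge> 0" using Suc.IH cls_delete[OF less.prems(1) i] by simp
      have "det Y' = det Y + (- exc Y i) * det (mat_delete Y i i)"
        unfolding Y'_def by (rule det_update[OF Y i])
      hence "det Y = det Y' + exc Y i * det (mat_delete Y i i)" by simp
      then show ?thesis using d1 d2 pos by simp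
    qed
  qed
  show ?case using main[OF Suc.prems refl] .
qed

lemma quad_id: "(a::real) * x * y = a * (x^2 / 2) + a * (y^2 / 2) - a * (x - y)^2 / 2"
proof -
  have "2 * (a * x * y) = a * x^2 + a * y^2 - a * (x - y)^2" by (simp add: power2_eq_square algebra_simps)
  thus ?thesis by simp
qed

lemma cls_psd:
  assumes c: "cls m Y"
  shows "(\<Sum>i = 0..<m. \<Sum>j = 0..<m. Y $$ (i,j) * v i * v j) \<ge> 0"
proof -
  have sym: "\<And>i j. i < m \<Longrightarrow> j < m \<Longrightarrow> Y $$ (i,j) = Y $$ (j,i)" using c unfolding cls_def by auto
  have Y: "Y \<in> carrier_mat m m" using c unfolding cls_def by auto
  define S1 where "S1 = (\<Sum>i = 0..<m. \<Sum>j = 0..<m. Y $$ (i,j) * ((v i)^2 / 2))"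
  define S2 where "S2 = (\<Sum>i = 0..<m. \<Sum>j = 0..<m. Y $$ (i,j) * ((v j)^2 / 2))"
  define S3 where "S3 = (\<Sum>i = 0..<m. \<Sum>j = 0..<m. Y $$ (i,j) * (v i - v j)^2 / 2)"
  have "(\<Sum>i = 0..<m. \<Sum>j = 0..<m. Y $$ (i,j) * v i * v j) =
     (\<Sum>i = 0..<m. \<Sum>j = 0..<m. Y $$ (i,j) * ((v i)^2 / 2) + Y $$ (i,j) * ((v j)^2 / 2)
          - Y $$ (i,j) * (v i - v j)^2 / 2)"
    by (intro sum.cong refl) (rule quad_id)
  also have "\<dots> = S1 + S2 - S3" unfolding S1_def S2_def S3_def
    by (simp only: sum.distrib sum_subtractf)
  finally have eq: "(\<Sum>i = 0..<m. \<Sum>j = 0..<m. Y $$ (i,j) * v i * v j) = S1 + S2 - S3" .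
  have "S2 = S1" unfolding S1_def S2_def
    by (subst sum.swap, intro sum.cong refl, simp add: sym)
  have "S1 = (\<Sum>i = 0..<m. exc Y i * ((v i)^2 / 2))" unfolding S1_def exc_def
    using Y by (simp add: sum_distrib_right sum_divide_distrib)
  hence t1: "S1 \<ge> 0"
    by (simp, intro sum_nonneg mult_nonneg_nonneg, insert c, auto simp: cls_def)
  have t3: "S3 \<le> 0" unfolding S3_def
  proof (intro sum_nonpos)
    fix i j assume i: "i \<in> {0..<m}" and j: "j \<in> {0..<m}"
    show "Y $$ (i, j) * (v i - v j)\<^sup>2 / 2 \<le> 0"
    proof (cases "i = j")
      case False
      hence "Y $$ (i,j) \<le> 0" using c i j unfolding cls_def by auto
      thus ?thesis by (simp add: mult_nonpos_nonneg divide_nonpos_pos)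
    qed simp
  qed
  show ?thesis unfolding eq using t1 t3 \<open>S2 = S1\<close> by simp
qed

lemma fg_idx: "x \<noteq> k \<Longrightarrow> fidx k (gidx k x) = x" by (auto simp: fidx_def gidx_def)
lemma gf_idx: "gidx k (fidx k a) = a" by (auto simp: fidx_def gidx_def)
lemma g_bound: "x < m \<Longrightarrow> x \<noteq> k \<Longrightarrow> k < m \<Longrightarrow> gidx k x < m - 1" by (auto simp: gidx_def)
lemma f_bound: "a < m - 1 \<Longrightarrow> fidx k a < m" by (auto simp: fidx_def)
lemma f_ne: "fidx k a \<noteq> k" by (auto simp: fidx_def)

lemma scls_addd:
  assumes s: "scls m Y" and d: "\<And>i. d i \<ge> 0"
  shows "scls m (addd Y d)"
proof -
  have c: "cls m Y" using s unfolding scls_def by auto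
  have Y: "Y \<in> carrier_mat m m" using c unfolding cls_def by auto
  have adj: "adjr (addd Y d) = adjr Y" by (intro ext, insert Y, auto simp: adjr_def addd_index)
  show ?thesis unfolding scls_def
  proof (intro conjI allI impI)
    show "cls m (addd Y d)" by (rule cls_addd[OF c d])
    fix i assume i: "i < m"
    { fix j assume j: "j < m" and "i \<noteq> j" and "addd Y d $$ (i,j) \<noteq> 0"
      thus "addd Y d $$ (i,j) \<le> -1" using s i Y unfolding scls_def by (auto simp: addd_index) }
    obtain z where z: "z < m" "(adjr Y)\<^sup>*\<^sup>* i z" "exc Y z \<ge> 1" using s i unfolding scls_def by blast
    have "exc (addd Y d) z \<ge> 1" unfolding exc_addd[OF Y z(1)] using z d[of z] by simp
    thus "\<exists>z<m. (adjr (addd Y d))\<^sup>*\<^sup>* i z \<and> 1 \<le> exc (addd Y d) z" unfolding adj using z by blast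
  qed
qed

lemma scls_delete:
  assumes s: "scls m Y" and k: "k < m"
  shows "scls (m-1) (mat_delete Y k k)"
proof -
  have c: "cls m Y" using s unfolding scls_def by auto
  have Y: "Y \<in> carrier_mat m m" using c unfolding cls_def by auto
  define Yd where "Yd = mat_delete Y k k"
  have dYd: "dim_row Yd = m - 1" unfolding Yd_def using Y by simp
  have claim: "\<exists>z'<m-1. (adjr Yd)\<^sup>*\<^sup>* (gidx k x) z' \<and> exc Yd z' \<ge> 1"
    if "(adjr Y)\<^sup>*\<^sup>* x t" "exc Y t \<ge> 1" "t < m" "x \<noteq> k" for x t
    using that
  proof (induction rule: converse_rtranclp_induct)
    case base
    have g: "gidx k t < m - 1" using g_bound[OF base(2) base(3) k] .
    have "Y $$ (t, k) \<le> 0" using c base k unfolding cls_def by auto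
    hence "exc Yd (gidx k t) \<ge> 1" unfolding Yd_def exc_delete[OF Y k g] fg_idx[OF base(3)]
      using base by simp
    thus ?case using g by blast
  next
    case (step x y)
    have x: "x < m" and xy: "Y $$ (x,y) \<noteq> 0" "x \<noteq> y" and y: "y < m"
      using step(1) Y unfolding adjr_def by auto
    have gx: "gidx k x < m - 1" using g_bound[OF x step(6) k] .
    show ?case
    proof (cases "y = k")
      case True
      have "Y $$ (x, k) \<le> -1" using s x k xy True step(6) unfolding scls_def by auto
      moreover have "exc Y x \<ge> 0" using c x unfolding cls_def by auto
      ultimately have "exc Yd (gidx k x) \<ge> 1" unfolding Yd_def exc_delete[OF Y k gx] fg_idx[OF step(6)]
        by simp
      thus ?thesis using gx by blast
    next
      case False
      from step.IH[OF step(4) step(5) False] obtain z' where z': "z' < m - 1"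
        "(adjr Yd)\<^sup>*\<^sup>* (gidx k y) z'" "exc Yd z' \<ge> 1" by blast
      have gy: "gidx k y < m - 1" using g_bound[OF y False k] .
      have "adjr Yd (gidx k x) (gidx k y)" unfolding adjr_def dYd
      proof (intro conjI)
        show "gidx k x \<noteq> gidx k y" using xy(2) fg_idx[OF step(6)] fg_idx[OF False] by metis
        show "Yd $$ (gidx k x, gidx k y) \<noteq> 0" unfolding Yd_def mat_delete_idx'[OF Y gx gy]
          fg_idx[OF step(6)] fg_idx[OF False] using xy by simp
      qed (use gx gy in auto)
      hence "(adjr Yd)\<^sup>*\<^sup>* (gidx k x) z'" using z'(2) by (rule converse_rtranclp_into_rtranclp)
      thus ?thesis using z' by blast
    qed
  qed
  show ?thesis unfolding scls_def Yd_def[symmetric]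
  proof (intro conjI allI impI)
    show "cls (m - 1) Yd" unfolding Yd_def by (rule cls_delete[OF c k])
    fix i assume i: "i < m - 1"
    { fix j assume j: "j < m - 1" and ij: "i \<noteq> j" and ne: "Yd $$ (i,j) \<noteq> 0"
      have "fidx k i \<noteq> fidx k j" using ij fidx_inj by (auto simp: inj_def)
      thus "Yd $$ (i,j) \<le> -1" using s ne f_bound[OF i] f_bound[OF j] unfolding scls_def Yd_def
        mat_delete_idx'[OF Y i j] by auto }
    obtain t where t: "t < m" "(adjr Y)\<^sup>*\<^sup>* (fidx k i) t" "exc Y t \<ge> 1"
      using s f_bound[OF i] unfolding scls_def by blast
    show "\<exists>z<m - 1. (adjr Yd)\<^sup>*\<^sup>* i z \<and> 1 \<le> exc Yd z"
      using claim[OF t(2) t(3) t(1) f_ne] unfolding gf_idx .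
  qed
qed

lemma scls_det: "scls m Y \<Longrightarrow> det Y \<ge> 1"
proof (induction m arbitrary: Y)
  case 0
  then show ?case using det_0x0 unfolding scls_def cls_def by auto
next
  case (Suc m)
  have c: "cls (Suc m) Y" using Suc.prems unfolding scls_def by auto
  have Y: "Y \<in> carrier_mat (Suc m) (Suc m)" using c unfolding cls_def by auto
  obtain z where z: "z < Suc m" "exc Y z \<ge> 1" using Suc.prems unfolding scls_def by blast
  define Y' where "Y' = addd Y (\<lambda>a. if a = z then - exc Y z else 0)"
  have ex': "exc Y' j = (if j = z then 0 else exc Y j)" if "j < Suc m" for j
    unfolding Y'_def exc_addd[OF Y that] by auto
  have cY': "cls (Suc m) Y'" unfolding cls_def
  proof (intro conjI allI impI)
    show "Y' \<in> carrier_mat (Suc m) (Suc m)" unfolding Y'_def using addd_carrier[OF Y] .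
    fix a assume a: "a < Suc m"
    { fix b assume b: "b < Suc m"
      show "Y' $$ (a, b) = Y' $$ (b, a)" using c a b Y unfolding cls_def Y'_def
        by (auto simp: addd_index)
      assume "a \<noteq> b"
      thus "Y' $$ (a, b) \<le> 0" using c a b Y unfolding cls_def Y'_def
        by (auto simp: addd_index) }
    show "0 \<le> exc Y' a" using ex'[OF a] c a unfolding cls_def by auto
  qed
  have d1: "det Y' \<ge> 0" by (rule cls_det_nonneg[OF cY'])
  have d2: "det (mat_delete Y z z) \<ge> 1" using Suc.IH scls_delete[OF Suc.prems z(1)] by simp
  have "det Y' = det Y + (- exc Y z) * det (mat_delete Y z z)"
    unfolding Y'_def by (rule det_update[OF Y z(1)])
  hence "det Y = det Y' + exc Y z * det (mat_delete Y z z)" by simp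
  moreover have "exc Y z * det (mat_delete Y z z) \<ge> 1 * 1" using z(2) d2
    by (intro mult_mono) auto
  ultimately show ?case using d1 by simp
qed

lemma adj_solve:
  fixes Z :: "real mat"
  assumes Z: "Z \<in> carrier_mat m m" and d: "det Z \<noteq> 0" and k: "k < m" and i: "i < m"
  shows "(\<Sum>j = 0..<m. Z $$ (i,j) * (adj_mat Z $$ (j,k) / det Z)) = (if i = k then 1 else 0)"
proof -
  have A: "adj_mat Z \<in> carrier_mat m m" using adj_mat(1)[OF Z] .
  have "(Z * adj_mat Z) $$ (i,k) = (det Z \<cdot>\<^sub>m 1\<^sub>m m) $$ (i,k)" using adj_mat(2)[OF Z] by simp
  hence "(\<Sum>j = 0..<m. Z $$ (i,j) * adj_mat Z $$ (j,k)) = det Z * (if i = k then 1 else 0)"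
    using Z A i k by (simp add: scalar_prod_def)
  hence "(\<Sum>j = 0..<m. Z $$ (i,j) * adj_mat Z $$ (j,k)) / det Z = (if i = k then 1 else 0)"
    using d by simp
  thus ?thesis by (simp add: sum_divide_distrib)
qed

lemma adj_diag: "(Z :: real mat) \<in> carrier_mat m m \<Longrightarrow> k < m \<Longrightarrow> adj_mat Z $$ (k,k) = det (mat_delete Z k k)"
  unfolding adj_mat_def cofactor_def by (simp flip: mult_2 add: power_even_eq[of "-1::real"])

lemma antitone:
  assumes c: "cls m Y" and b: "\<And>i. b i \<ge> 0" and dY: "det Y > 0" and dY': "det (addd Y b) > 0"
    and k: "k < m"
  shows "det (mat_delete (addd Y b) k k) / det (addd Y b) \<le> det (mat_delete Y k k) / det Y"
proof -
  have Y: "Y \<in> carrier_mat m m" using c unfolding cls_def by auto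
  have sym: "\<And>i j. i < m \<Longrightarrow> j < m \<Longrightarrow> Y $$ (i,j) = Y $$ (j,i)" using c unfolding cls_def by auto
  define Y' where "Y' = addd Y b"
  have Y': "Y' \<in> carrier_mat m m" unfolding Y'_def using addd_carrier[OF Y] .
  define u where "u j = adj_mat Y $$ (j,k) / det Y" for j
  define u' where "u' j = adj_mat Y' $$ (j,k) / det Y'" for j
  have uk: "u k = det (mat_delete Y k k) / det Y" unfolding u_def adj_diag[OF Y k] ..
  have uk': "u' k = det (mat_delete Y' k k) / det Y'" unfolding u'_def adj_diag[OF Y' k] ..
  have Mu: "(\<Sum>j = 0..<m. Y $$ (i,j) * u j) = (if i = k then 1 else 0)" if "i < m" for i
    unfolding u_def by (rule adj_solve[OF Y _ k that], insert dY, simp)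
  have Mu'0: "(\<Sum>j = 0..<m. Y' $$ (i,j) * u' j) = (if i = k then 1 else 0)" if "i < m" for i
    unfolding u'_def by (rule adj_solve[OF Y' _ k that], insert dY', simp add: Y'_def)
  have Mu': "(\<Sum>j = 0..<m. Y $$ (i,j) * u' j) = (if i = k then 1 else 0) - b i * u' i" if i: "i < m" for i
  proof -
    have "(\<Sum>j = 0..<m. Y' $$ (i,j) * u' j) = (\<Sum>j = 0..<m. Y $$ (i,j) * u' j + (if i = j then b i * u' j else 0))"
      by (rule sum.cong, insert Y i, auto simp: Y'_def addd_index algebra_simps)
    also have "\<dots> = (\<Sum>j = 0..<m. Y $$ (i,j) * u' j) + b i * u' i"
      unfolding sum.distrib using i by simp
    finally show ?thesis using Mu'0[OF i] by simp
  qed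
  have swap: "(\<Sum>i = 0..<m. u' i * (\<Sum>j = 0..<m. Y $$ (i,j) * u j)) =
              (\<Sum>i = 0..<m. u i * (\<Sum>j = 0..<m. Y $$ (i,j) * u' j))"
  proof -
    have "(\<Sum>i = 0..<m. u' i * (\<Sum>j = 0..<m. Y $$ (i,j) * u j)) =
          (\<Sum>i = 0..<m. \<Sum>j = 0..<m. u' i * Y $$ (i,j) * u j)"
      by (simp add: sum_distrib_left mult.assoc)
    also have "\<dots> = (\<Sum>j = 0..<m. \<Sum>i = 0..<m. u' i * Y $$ (i,j) * u j)" by (rule sum.swap)
    also have "\<dots> = (\<Sum>j = 0..<m. \<Sum>i = 0..<m. u j * (Y $$ (j,i) * u' i))"
      by (intro sum.cong refl, simp add: sym)
    also have "\<dots> = (\<Sum>i = 0..<m. u i * (\<Sum>j = 0..<m. Y $$ (i,j) * u' j))"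
      by (simp add: sum_distrib_left)
    finally show ?thesis .
  qed
  have l: "(\<Sum>i = 0..<m. u' i * (\<Sum>j = 0..<m. Y $$ (i,j) * u j)) = u' k"
  proof -
    have "(\<Sum>i = 0..<m. u' i * (\<Sum>j = 0..<m. Y $$ (i,j) * u j)) = (\<Sum>i = 0..<m. if i = k then u' i else 0)"
      by (rule sum.cong, auto simp: Mu)
    thus ?thesis using k by simp
  qed
  have r: "(\<Sum>i = 0..<m. u i * (\<Sum>j = 0..<m. Y $$ (i,j) * u' j)) = u k - (\<Sum>i = 0..<m. b i * u i * u' i)"
  proof -
    have "(\<Sum>i = 0..<m. u i * (\<Sum>j = 0..<m. Y $$ (i,j) * u' j)) =
          (\<Sum>i = 0..<m. (if i = k then u i else 0) - b i * u i * u' i)"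
    proof (rule sum.cong[OF refl])
      fix i assume "i \<in> {0..<m}"
      hence "i < m" by simp
      show "u i * (\<Sum>j = 0..<m. Y $$ (i,j) * u' j) = (if i = k then u i else 0) - b i * u i * u' i"
        unfolding Mu'[OF \<open>i < m\<close>] by (simp add: algebra_simps)
    qed
    thus ?thesis using k by (simp add: sum_subtractf)
  qed
  define x where "x i = u i - u' i" for i
  have Mx: "(\<Sum>j = 0..<m. Y $$ (i,j) * x j) = b i * u' i" if "i < m" for i
  proof -
    have "(\<Sum>j = 0..<m. Y $$ (i,j) * x j) = (\<Sum>j = 0..<m. Y $$ (i,j) * u j) - (\<Sum>j = 0..<m. Y $$ (i,j) * u' j)"
      unfolding x_def by (simp add: sum_subtractf algebra_simps)
    thus ?thesis using Mu[OF that] Mu'[OF that] by simp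
  qed
  have "0 \<le> (\<Sum>i = 0..<m. \<Sum>j = 0..<m. Y $$ (i,j) * x i * x j)" by (rule cls_psd[OF c])
  also have "\<dots> = (\<Sum>i = 0..<m. x i * (\<Sum>j = 0..<m. Y $$ (i,j) * x j))"
    by (simp add: sum_distrib_left algebra_simps)
  also have "\<dots> = (\<Sum>i = 0..<m. x i * (b i * u' i))" by (rule sum.cong, auto simp: Mx)
  finally have q: "0 \<le> (\<Sum>i = 0..<m. x i * (b i * u' i))" .
  have "(\<Sum>i = 0..<m. b i * u i * u' i) = (\<Sum>i = 0..<m. x i * (b i * u' i)) + (\<Sum>i = 0..<m. b i * (u' i)^2)"
    unfolding sum.distrib[symmetric] by (rule sum.cong, auto simp: x_def power2_eq_square algebra_simps)
  moreover have "(\<Sum>i = 0..<m. b i * (u' i)^2) \<ge> 0" using b by (intro sum_nonneg) auto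
  ultimately have "(\<Sum>i = 0..<m. b i * u i * u' i) \<ge> 0" using q by simp
  hence "u' k \<le> u k" using swap l r by simp
  thus ?thesis unfolding uk uk' Y'_def .
qed

definition trunc :: "(nat \<Rightarrow> real) \<Rightarrow> nat \<Rightarrow> nat \<Rightarrow> real" where
  "trunc a k = (\<lambda>i. if i < k then a i else 0)"

lemma trunc_nonneg: "(\<And>i. a i \<ge> 0) \<Longrightarrow> trunc a k i \<ge> 0" unfolding trunc_def by auto

lemma trunc_Suc: "addd Y (trunc a (Suc k)) = addd (addd Y (trunc a k)) (\<lambda>i. if i = k then a k else 0)"
  unfolding addd_addd by (rule arg_cong[where f="addd Y"], auto simp: trunc_def)

lemma trunc_0: "addd Y (trunc a 0) = Y" unfolding trunc_def using addd_zero by simp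

lemma trunc_m: "Y \<in> carrier_mat m m \<Longrightarrow> addd Y (trunc a m) = addd Y a"
  by (rule addd_cong, auto simp: trunc_def)

lemma addd_delta_big: "Y \<in> carrier_mat m m \<Longrightarrow> \<not> k < m \<Longrightarrow> addd Y (\<lambda>i. if i = k then c else 0) = Y"
  using addd_cong[of Y m "\<lambda>i. if i = k then c else 0" "\<lambda>_. 0"] addd_zero by auto

lemma mono_det:
  assumes s: "scls m Y" and a: "\<And>i. a i \<ge> 0"
  shows "det Y \<le> det (addd Y a)"
proof -
  have c: "cls m Y" using s unfolding scls_def by auto
  have Y: "Y \<in> carrier_mat m m" using c unfolding cls_def by auto
  have "det Y \<le> det (addd Y (trunc a k))" for k
  proof (induction k)
    case 0 then show ?case unfolding trunc_0 by simp
  next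
    case (Suc k)
    define W where "W = addd Y (trunc a k)"
    have W: "W \<in> carrier_mat m m" unfolding W_def using addd_carrier[OF Y] .
    have cW: "cls m W" unfolding W_def by (rule cls_addd[OF c trunc_nonneg[OF a]])
    show ?case
    proof (cases "k < m")
      case True
      have "det (addd Y (trunc a (Suc k))) = det W + a k * det (mat_delete W k k)"
        unfolding trunc_Suc W_def[symmetric] by (rule det_update[OF W True])
      moreover have "det (mat_delete W k k) \<ge> 0" using cls_det_nonneg[OF cls_delete[OF cW True]] .
      ultimately have "a k * det (mat_delete W k k) \<ge> 0" "det (addd Y (trunc a (Suc k))) = det W + a k * det (mat_delete W k k)"
        using a[of k] by auto
      thus ?thesis using Suc unfolding W_def by linarith
    next
      case False
      then show ?thesis unfolding trunc_Suc addd_delta_big[OF addd_carrier[OF Y] False] using Suc by simp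
    qed
  qed
  from this[of m] show ?thesis unfolding trunc_m[OF Y] .
qed

lemma scls_detpos: "scls m Y \<Longrightarrow> det Y > 0" using scls_det[of m Y] by simp

lemma ratio:
  assumes s: "scls m Y" and a: "\<And>i. a i \<ge> 0" and b: "\<And>i. b i \<ge> 0"
  shows "det (addd (addd Y b) a) / det (addd Y b) \<le> det (addd Y a) / det Y"
proof -
  have c: "cls m Y" using s unfolding scls_def by auto
  have Y: "Y \<in> carrier_mat m m" using c unfolding cls_def by auto
  have sb: "scls m (addd Y b)" by (rule scls_addd[OF s b])
  have Yb: "addd Y b \<in> carrier_mat m m" using addd_carrier[OF Y] .
  have "det (addd (addd Y b) (trunc a k)) / det (addd Y b) \<le> det (addd Y (trunc a k)) / det Y" for k
  proof (induction k)
    case 0 then show ?case unfolding trunc_0 using scls_detpos[OF s] scls_detpos[OF sb] by simp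
  next
    case (Suc k)
    define W where "W = addd Y (trunc a k)"
    define W' where "W' = addd (addd Y b) (trunc a k)"
    have W: "W \<in> carrier_mat m m" unfolding W_def using addd_carrier[OF Y] .
    have W': "W' \<in> carrier_mat m m" unfolding W'_def using addd_carrier[OF Yb] .
    have sW: "scls m W" unfolding W_def by (rule scls_addd[OF s trunc_nonneg[OF a]])
    have sW': "scls m W'" unfolding W'_def by (rule scls_addd[OF sb trunc_nonneg[OF a]])
    have WW': "W' = addd W b" unfolding W_def W'_def addd_addd by (simp add: add.commute)
    have cW: "cls m W" using sW unfolding scls_def by auto
    have pW: "det W > 0" using scls_detpos[OF sW] .
    have pW': "det W' > 0" using scls_detpos[OF sW'] .
    have pY: "det Y > 0" using scls_detpos[OF s] .
    have pYb: "det (addd Y b) > 0" using scls_detpos[OF sb] .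
    show ?case
    proof (cases "k < m")
      case True
      have e1: "det (addd Y (trunc a (Suc k))) = det W + a k * det (mat_delete W k k)"
        unfolding trunc_Suc W_def[symmetric] by (rule det_update[OF W True])
      have e2: "det (addd (addd Y b) (trunc a (Suc k))) = det W' + a k * det (mat_delete W' k k)"
        unfolding trunc_Suc W'_def[symmetric] by (rule det_update[OF W' True])
      have anti: "det (mat_delete W' k k) / det W' \<le> det (mat_delete W k k) / det W"
        unfolding WW' by (rule antitone[OF cW b pW _ True], insert pW', simp add: WW')
      have f1: "det (addd Y (trunc a (Suc k))) / det Y = (det W / det Y) * (1 + a k * (det (mat_delete W k k) / det W))"
        unfolding e1 using pW pY by (simp add: field_simps)
      have f2: "det (addd (addd Y b) (trunc a (Suc k))) / det (addd Y b) =
          (det W' / det (addd Y b)) * (1 + a k * (det (mat_delete W' k k) / det W'))"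
        unfolding e2 using pW' pYb by (simp add: field_simps)
      have IH: "det W' / det (addd Y b) \<le> det W / det Y" using Suc unfolding W_def W'_def .
      have nn: "0 \<le> 1 + a k * (det (mat_delete W' k k) / det W')"
        using a[of k] pW' cls_det_nonneg[OF cls_delete[OF cW True]]
              cls_det_nonneg[OF cls_delete[OF _ True], of W'] sW' unfolding scls_def by simp
      have m2: "1 + a k * (det (mat_delete W' k k) / det W') \<le> 1 + a k * (det (mat_delete W k k) / det W)"
        using mult_left_mono[OF anti a[of k]] by simp
      show ?thesis unfolding f1 f2
        by (rule mult_mono[OF IH m2], insert pW pY nn, auto)
    next
      case False
      then show ?thesis unfolding trunc_Suc addd_delta_big[OF addd_carrier[OF Y] False]
        addd_delta_big[OF addd_carrier[OF Yb] False] using Suc by simp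
    qed
  qed
  from this[of m] show ?thesis unfolding trunc_m[OF Y] trunc_m[OF Yb] .
qed

theorem lemma5:
  fixes Kloc Kg :: "'a set" and k :: 'a and w :: "'a \<Rightarrow> 'a \<Rightarrow> real"
    and Info :: "real mat" and n :: nat and r :: "nat \<Rightarrow> 'a"
  assumes fin: "finite Kloc" "finite Kg"
    and disj: "k \<notin> Kloc" "k \<notin> Kg" "Kloc \<inter> Kg = {}"
    and sym: "\<And>x y. w x y = w y x"
    and wt: "\<And>x y. w x y \<noteq> 0 \<Longrightarrow> w x y \<ge> 1"
    and edges: "\<And>x y. w x y \<noteq> 0 \<Longrightarrow>
                   (x \<in> insert k Kloc \<and> y \<in> insert k Kloc \<union> Kg) \<or>
                   (y \<in> insert k Kloc \<and> x \<in> insert k Kloc \<union> Kg)"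
    and conn: "connected_on w (insert k Kloc)"
    and Ipd: "sym_pos_def 6 Info" and Idet: "det Info \<ge> 1"
    and order: "bij_betw r {0..<n} (insert k Kloc)"
  defines "g \<equiv> \<lambda>F. ln (det (I_loc_tilde w Info n r F))"
  shows "(\<forall>F. F \<subseteq> Kg \<longrightarrow> g F \<ge> 0)
       \<and> (\<forall>A B. A \<subseteq> B \<and> B \<subseteq> Kg \<longrightarrow> g A \<le> g B)
       \<and> (\<forall>A B. A \<subseteq> Kg \<and> B \<subseteq> Kg \<longrightarrow> g A + g B \<ge> g (A \<union> B) + g (A \<inter> B))"
proof -
  define R where "R = insert k Kloc"
  have finR: "finite R" unfolding R_def using fin by simp
  have rimg: "r ` {0..<n} = R" using order unfolding R_def bij_betw_def by auto
  have rinj: "inj_on r {0..<n}" using order unfolding bij_betw_def by auto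
  have RKg: "R \<inter> Kg = {}" unfolding R_def using disj by auto
  have npos: "n > 0" proof (rule ccontr) assume "\<not> n > 0" hence "R = {}" using rimg by auto
    thus False unfolding R_def by auto qed
  define m where "m = n - 1"
  have nm: "n = Suc m" unfolding m_def using npos by simp
  have wnn: "w x y \<ge> 0" for x y using wt[of x y] by (cases "w x y = 0") auto
  define A where "A F = mat_delete (L_loc w n r F) 0 0" for F
  define dF where "dF F = (\<lambda>a. \<Sum>f\<in>F. w (r (Suc a)) f)" for F
  have Lc: "L_loc w n r F \<in> carrier_mat n n" for F unfolding L_loc_def by simp
  have Ac: "A F \<in> carrier_mat m m" for F unfolding A_def m_def using mat_delete_carrier[OF Lc] .
  have Aidx: "A F $$ (a,b) = (if a = b then (\<Sum>y \<in> R - {r (Suc a)}. w (r (Suc a)) y) + (\<Sum>f\<in>F. w (r (Suc a)) f)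
       else - w (r (Suc a)) (r (Suc b)))" if "a < m" "b < m" "finite F" "F \<inter> R = {}" for F a b
  proof -
    have e: "A F $$ (a,b) = L_loc w n r F $$ (Suc a, Suc b)" unfolding A_def mat_delete_def
      using that Lc[of F] unfolding m_def by auto
    have xR: "r (Suc a) \<in> R" using rimg that nm by auto
    have se: "(R \<union> F) - {r (Suc a)} = (R - {r (Suc a)}) \<union> F" using that xR by auto
    have "(\<Sum>y \<in> (R - {r (Suc a)}) \<union> F. w (r (Suc a)) y) =
        (\<Sum>y \<in> R - {r (Suc a)}. w (r (Suc a)) y) + (\<Sum>f\<in>F. w (r (Suc a)) f)"
      by (rule sum.union_disjoint) (use that finR in auto)
    hence s: "(\<Sum>y \<in> (R \<union> F) - {r (Suc a)}. w (r (Suc a)) y) =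
        (\<Sum>y \<in> R - {r (Suc a)}. w (r (Suc a)) y) + (\<Sum>f\<in>F. w (r (Suc a)) f)"
      unfolding se .
    show ?thesis
    proof (cases "a = b")
      case True
      then show ?thesis unfolding e using that nm s rimg by (simp add: L_loc_def)
    next
      case False
      then show ?thesis unfolding e using that nm by (simp add: L_loc_def)
    qed
  qed
  define A0 where "A0 = A {}"
  have A0idx: "A0 $$ (a,b) = (if a = b then (\<Sum>y \<in> R - {r (Suc a)}. w (r (Suc a)) y)
       else - w (r (Suc a)) (r (Suc b)))" if "a < m" "b < m" for a b
    unfolding A0_def using Aidx[OF that, of "{}"] by simp
  have A0c: "A0 \<in> carrier_mat m m" unfolding A0_def by (rule Ac)
  have AF: "A F = addd A0 (dF F)" if "F \<subseteq> Kg" for F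
  proof (rule eq_matI)
    have f: "finite F" using that fin finite_subset by auto
    have d: "F \<inter> R = {}" using that RKg by auto
    fix a b assume "a < dim_row (addd A0 (dF F))" "b < dim_col (addd A0 (dF F))"
    hence ab: "a < m" "b < m" using Ac[of "{}"] unfolding A0_def by auto
    show "A F $$ (a,b) = addd A0 (dF F) $$ (a,b)"
      unfolding Aidx[OF ab f d] using ab A0c by (simp add: addd_index A0idx dF_def)
  qed (insert Ac[of F] A0c, auto)
  have dF_nn: "dF F a \<ge> 0" for F a unfolding dF_def by (intro sum_nonneg wnn)
  have excA0: "exc A0 a = w (r (Suc a)) (r 0)" if a: "a < m" for a
  proof -
    define x where "x = r (Suc a)"
    have xR: "x \<in> R" using rimg a nm unfolding x_def by auto
    have SR: "(\<Sum>y\<in>R. w x y) = w x (r 0) + (\<Sum>b = 0..<m. w x (r (Suc b)))"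
    proof -
      have "(\<Sum>y\<in>R. w x y) = (\<Sum>j = 0..<n. w x (r j))" unfolding rimg[symmetric]
        by (rule sum.reindex[OF rinj, unfolded comp_def])
      thus ?thesis unfolding nm by (simp add: sum.atLeast0_lessThan_Suc_shift del: sum.op_ivl_Suc)
    qed
    have S: "(\<Sum>y \<in> R - {x}. w x y) = (\<Sum>y\<in>R. w x y) - w x x" using finR xR by (simp add: sum_diff1)
    have "exc A0 a = (\<Sum>b = 0..<m. A0 $$ (a,b))" unfolding exc_def using Ac[of "{}"] unfolding A0_def by simp
    also have "\<dots> = (\<Sum>b = 0..<m. (if a = b then (\<Sum>y \<in> R - {x}. w x y) + w x (r (Suc b)) else 0) - w x (r (Suc b)))"
      by (rule sum.cong, auto simp: A0idx a x_def)
    also have "\<dots> = (\<Sum>y \<in> R - {x}. w x y) + w x x - (\<Sum>b = 0..<m. w x (r (Suc b)))"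
      unfolding sum_subtractf using a by (simp add: x_def)
    also have "\<dots> = w x (r 0)" using SR S by simp
    finally show ?thesis unfolding x_def .
  qed
  define idx where "idx x = the_inv_into {0..<n} r x - 1" for x
  have idx1: "idx x < m \<and> r (Suc (idx x)) = x" if "x \<in> R" "x \<noteq> r 0" for x
  proof -
    define j where "j = the_inv_into {0..<n} r x"
    have xi: "x \<in> r ` {0..<n}" using that rimg by auto
    have j: "j \<in> {0..<n}" "r j = x" unfolding j_def
      using the_inv_into_into[OF rinj xi subset_refl] f_the_inv_into_f[OF rinj xi] by auto
    have "j \<noteq> 0" proof assume "j = 0" thus False using j that by auto qed
    thus ?thesis using j unfolding idx_def j_def[symmetric] m_def by auto
  qed
  have idx2: "idx (r (Suc a)) = a" if "a < m" for a
    unfolding idx_def using the_inv_into_f_f[OF rinj, of "Suc a"] that nm by simp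
  have adjA0: "adjr A0 i j \<longleftrightarrow> i < m \<and> j < m \<and> i \<noteq> j \<and> w (r (Suc i)) (r (Suc j)) \<noteq> 0" for i j
    unfolding adjr_def using Ac[of "{}"] A0idx unfolding A0_def by auto
  have path: "\<exists>z<m. (adjr A0)\<^sup>*\<^sup>* (idx x) z \<and> w (r (Suc z)) (r 0) \<noteq> 0"
    if "(\<lambda>a b. a \<in> R \<and> b \<in> R \<and> w a b \<noteq> 0)\<^sup>*\<^sup>* x y" "y = r 0" "x \<in> R" "x \<noteq> r 0" for x y
    using that
  proof (induction rule: converse_rtranclp_induct)
    case base then show ?case by simp
  next
    case (step x x')
    have xx': "x' \<in> R" "w x x' \<noteq> 0" using step(1) by auto
    show ?case
    proof (cases "x' = r 0")
      case True
      show ?thesis using idx1[OF step(5) step(6)] xx'(2) True by auto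
    next
      case False
      show ?thesis
      proof (cases "x' = x")
        case True then show ?thesis using step.IH[OF step(4) xx'(1) False] by simp
      next
        case ne: False
        obtain z where z: "z < m" "(adjr A0)\<^sup>*\<^sup>* (idx x') z" "w (r (Suc z)) (r 0) \<noteq> 0"
          using step.IH[OF step(4) xx'(1) False] by blast
        have i1: "idx x < m" "r (Suc (idx x)) = x" using idx1[OF step(5) step(6)] by auto
        have i2: "idx x' < m" "r (Suc (idx x')) = x'" using idx1[OF xx'(1) False] by auto
        have "idx x \<noteq> idx x'" using i1 i2 ne by metis
        hence "adjr A0 (idx x) (idx x')" unfolding adjA0 using i1 i2 xx' by simp
        hence "(adjr A0)\<^sup>*\<^sup>* (idx x) z" using z(2) by (rule converse_rtranclp_into_rtranclp)
        thus ?thesis using z by blast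
      qed
    qed
  qed
  have sA0: "scls m A0" unfolding scls_def cls_def
  proof (intro conjI allI impI)
    show "A0 \<in> carrier_mat m m" unfolding A0_def by (rule Ac)
    fix i assume i: "i < m"
    { fix j assume j: "j < m"
      show "A0 $$ (i,j) = A0 $$ (j,i)" using i j by (auto simp: A0idx sym)
      { assume "i \<noteq> j" thus "A0 $$ (i,j) \<le> 0" using i j wnn by (simp add: A0idx) }
      assume ij: "i \<noteq> j" and ne: "A0 $$ (i,j) \<noteq> 0"
      thus "A0 $$ (i,j) \<le> -1" using i j wt by (auto simp: A0idx) }
    show "0 \<le> exc A0 i" unfolding excA0[OF i] by (rule wnn)
    have xR1: "r (Suc i) \<in> R" using rimg i nm by auto
    have "r (Suc i) \<noteq> r 0"
    proof
      assume "r (Suc i) = r 0"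
      hence "Suc i = 0" using rinj i nm unfolding inj_on_def by (metis atLeastLessThan_iff less_Suc_eq_0_disj zero_le)
      thus False by simp
    qed
    note xR = xR1 this
    have "(\<lambda>a b. a \<in> R \<and> b \<in> R \<and> w a b \<noteq> 0)\<^sup>*\<^sup>* (r (Suc i)) (r 0)"
    proof -
      have r0: "r 0 \<in> R" using rimg npos by auto
      have "\<forall>x\<in>R. \<forall>y\<in>R. (\<lambda>a b. a \<in> R \<and> b \<in> R \<and> w a b \<noteq> 0)\<^sup>*\<^sup>* x y"
        using conn unfolding connected_on_def R_def .
      thus ?thesis using xR1 r0 by blast
    qed
    from path[OF this refl xR] obtain z where z: "z < m" "(adjr A0)\<^sup>*\<^sup>* i z" "w (r (Suc z)) (r 0) \<noteq> 0"
      unfolding idx2[OF i] by blast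
    show "\<exists>z<m. (adjr A0)\<^sup>*\<^sup>* i z \<and> 1 \<le> exc A0 z" using z excA0[OF z(1)] wt by auto
  qed
  have Ic: "Info \<in> carrier_mat 6 6" using Ipd unfolding sym_pos_def_def by auto
  have sAF: "scls m (A F)" if "F \<subseteq> Kg" for F unfolding AF[OF that] by (rule scls_addd[OF sA0 dF_nn])
  define G where "G F = ln (det (A F))" for F
  have gG: "g F = 6 * G F + real m * ln (det Info)" if "F \<subseteq> Kg" for F
  proof -
    have "det (I_loc_tilde w Info n r F) = det (A F) ^ 6 * det Info ^ m"
      unfolding I_loc_tilde_def A_def[symmetric] by (rule det_kron[OF Ac Ic])
    moreover have "det (A F) > 0" using scls_detpos[OF sAF[OF that]] .
    moreover have "det Info > 0" using Idet by simp
    ultimately show ?thesis unfolding g_def G_def by (simp add: ln_mult ln_realpow)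
  qed
  have G0: "G F \<ge> 0" if "F \<subseteq> Kg" for F unfolding G_def using scls_det[OF sAF[OF that]] by simp
  have lnI: "ln (det Info) \<ge> 0" using Idet by simp
  have dFun: "dF (S \<union> T) = (\<lambda>a. dF S a + dF T a)" if "S \<subseteq> Kg" "T \<subseteq> Kg" "S \<inter> T = {}" for S T
    unfolding dF_def using that fin by (intro ext sum.union_disjoint) (auto intro: finite_subset)
  have P1: "\<forall>F. F \<subseteq> Kg \<longrightarrow> g F \<ge> 0" using gG G0 lnI by simp
  have P2: "\<forall>S T. S \<subseteq> T \<and> T \<subseteq> Kg \<longrightarrow> g S \<le> g T"
  proof (intro allI impI)
    fix S T assume h: "S \<subseteq> T \<and> T \<subseteq> Kg"
    have TS: "T = S \<union> (T - S)" using h by auto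
    have hS: "S \<subseteq> Kg" using h by auto
    have "dF T = (\<lambda>a. dF S a + dF (T - S) a)" by (subst TS, rule dFun, insert h, auto)
    hence "A T = addd (A S) (dF (T - S))"
      unfolding AF[of T, OF conjunct2[OF h]] AF[OF hS] addd_addd by simp
    hence "det (A S) \<le> det (A T)" using mono_det[OF sAF dF_nn] h by auto
    moreover have "det (A S) > 0" using scls_detpos[OF sAF[OF hS]] .
    ultimately have "G S \<le> G T" unfolding G_def by simp
    thus "g S \<le> g T" using gG h by auto
  qed
  have P3: "\<forall>S T. S \<subseteq> Kg \<and> T \<subseteq> Kg \<longrightarrow> g S + g T \<ge> g (S \<union> T) + g (S \<inter> T)"
  proof (intro allI impI)
    fix S T assume h: "S \<subseteq> Kg \<and> T \<subseteq> Kg"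
    define X where "X = A (S \<inter> T)"
    have hS: "S \<subseteq> Kg" and hT: "T \<subseteq> Kg" and hST: "S \<inter> T \<subseteq> Kg" and hU: "S \<union> T \<subseteq> Kg"
      using h by auto
    have sX: "scls m X" unfolding X_def by (rule sAF[OF hST])
    have e1: "A S = addd X (dF (S - T))"
    proof -
      have "S = (S \<inter> T) \<union> (S - T)" by auto
      hence "dF S = (\<lambda>a. dF (S \<inter> T) a + dF (S - T) a)" using dFun[of "S \<inter> T" "S - T"] h by auto
      thus ?thesis unfolding X_def AF[OF hS] AF[OF hST] addd_addd by simp
    qed
    have e2: "A T = addd X (dF (T - S))"
    proof -
      have "T = (S \<inter> T) \<union> (T - S)" by auto
      hence "dF T = (\<lambda>a. dF (S \<inter> T) a + dF (T - S) a)" using dFun[of "S \<inter> T" "T - S"] h by auto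
      thus ?thesis unfolding X_def AF[OF hT] AF[OF hST] addd_addd by simp
    qed
    have e3: "A (S \<union> T) = addd (addd X (dF (T - S))) (dF (S - T))"
    proof -
      have "S \<union> T = ((S \<inter> T) \<union> (T - S)) \<union> (S - T)" by auto
      moreover have "dF ((S \<inter> T) \<union> (T - S)) = (\<lambda>a. dF (S \<inter> T) a + dF (T - S) a)"
        by (rule dFun) (use h in auto)
      moreover have "dF (((S \<inter> T) \<union> (T - S)) \<union> (S - T)) = (\<lambda>a. dF ((S \<inter> T) \<union> (T - S)) a + dF (S - T) a)"
        by (rule dFun) (use h in auto)
      ultimately have "dF (S \<union> T) = (\<lambda>a. (dF (S \<inter> T) a + dF (T - S) a) + dF (S - T) a)"
        by simp
      thus ?thesis unfolding X_def AF[OF hU] AF[OF hST] addd_addd by simp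
    qed
    have "det (A (S \<union> T)) / det (A T) \<le> det (A S) / det X"
      unfolding e1 e2 e3 by (rule ratio[OF sX dF_nn dF_nn])
    moreover have "det (A T) > 0" "det X > 0" "det (A S) > 0" "det (A (S \<union> T)) > 0"
      using scls_detpos[OF sAF] h sX scls_detpos by auto
    ultimately have "det (A (S \<union> T)) * det X \<le> det (A S) * det (A T)"
      by (simp add: divide_simps)
    moreover have p1: "det (A (S \<union> T)) * det X > 0"
      using \<open>det X > 0\<close> \<open>det (A (S \<union> T)) > 0\<close> by simp
    moreover have p2: "det (A S) * det (A T) > 0"
      using \<open>det (A S) > 0\<close> \<open>det (A T) > 0\<close> by simp
    ultimately have "ln (det (A (S \<union> T)) * det X) \<le> ln (det (A S) * det (A T))"
      using ln_le_cancel_iff[OF p1 p2] by blast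
    moreover have "ln (det (A (S \<union> T)) * det X) = G (S \<union> T) + G (S \<inter> T)"
      unfolding G_def X_def[symmetric] using \<open>det X > 0\<close> \<open>det (A (S \<union> T)) > 0\<close> by (simp add: ln_mult)
    moreover have "ln (det (A S) * det (A T)) = G S + G T"
      unfolding G_def using \<open>det (A S) > 0\<close> \<open>det (A T) > 0\<close> by (simp add: ln_mult)
    ultimately have "G (S \<union> T) + G (S \<inter> T) \<le> G S + G T" by simp
    moreover have "S \<union> T \<subseteq> Kg" "S \<inter> T \<subseteq> Kg" using h by auto
    ultimately show "g S + g T \<ge> g (S \<union> T) + g (S \<inter> T)" using gG h by auto
  qed
  show ?thesis using P1 P2 P3 by blast
qed

end
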